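(* Let $M,N\in\mathbb{N}$ and let $E$ be the Motzkin code of $\mathbf{M}(M,N)$. Its generating function $f(E,z)=\sum_{u\in E}z^{|u|}$ (a formal power series) satisfies $$f(E,z)^2+(Nz-1)f(E,z)+Mz^2=0,$$ and hence $f(E,z)=\frac12\left\{1-Nz-\sqrt{(1-Nz)^2-4Mz^2}\right\}$.
   Context: Alphabet $\Sigma=\{\lambda_1,\dots,\lambda_M,\rho_1,\dots,\rho_M,1_1,\dots,1_N\}$. $\mathcal{M}(M,N)$ is the monoid with zero generated by $\Sigma$ and an identity $\mathbf{1}$, subject only to the relations $\lambda_i\rho_i=\mathbf{1}$, $\lambda_i\rho_j=0$ ($i\neq j$), each $1_i$ acts as the identity ($1_i\alpha=\alpha 1_i=\alpha$, $1_i1_j=\mathbf 1$), and $0$ is absorbing; no other relations. $\mathit{red}:\Sigma^*\to\mathcal{M}(M,N)$ sends a word to the product of its letters (empty word to $\mathbf 1$). The Motzkin shift is $\mathbf{M}(M,N)=\{x\in\Sigma^{\mathbb Z}:\mathit{red}(x_i\cdots x_j)\neq 0\ \forall i\le j\}$, and $\mathcal B_n(\mathbf M(M,N))$ denotes its set of blocks of length $n$. The Motzkin code is $E=\bigcup_{n\ge1}E_n$ with $E_n=\{w\in\mathcal B_n(\mathbf M(M,N)): w=\lambda_i v\rho_i \text{ for some } 1\le i\le M \text{ and some word } v \text{ with } \mathit{red}(v)=\mathbf 1\}$; $|u|$ denotes the length of $u$. *)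

theory Defs
  imports "HOL-Computational_Algebra.Formal_Power_Series"
begin

(* Letters: Lam i = lambda_i, Rho i = rho_i, One i = 1_i (indices start at 1). *)
datatype letter = Lam nat | Rho nat | One nat

definition alphabet :: "nat \<Rightarrow> nat \<Rightarrow> letter set" where
  "alphabet M N = {Lam i | i. 1 \<le> i \<and> i \<le> M} \<union> {Rho i | i. 1 \<le> i \<and> i \<le> M}
                  \<union> {One i | i. 1 \<le> i \<and> i \<le> N}"

(* Concrete model of the monoid M(M,N): every nonzero element is uniquely
   rho_{j1}...rho_{jk} lambda_{i1}...lambda_{il}; it is represented as
   Some (rs, ls) with rs = [j1,...,jk] and ls = [il,...,i1] (stack, top first).
   None represents 0; Some ([],[]) represents the identity. *)
type_synonym melem = "(nat list \<times> nat list) option"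

fun mstep :: "melem \<Rightarrow> letter \<Rightarrow> melem" where
  "mstep None _ = None"
| "mstep (Some (rs, ls)) (One _) = Some (rs, ls)"
| "mstep (Some (rs, ls)) (Lam i) = Some (rs, i # ls)"
| "mstep (Some (rs, [])) (Rho j) = Some (rs @ [j], [])"
| "mstep (Some (rs, i # ls)) (Rho j) = (if i = j then Some (rs, ls) else None)"

definition red :: "letter list \<Rightarrow> melem" where
  "red w = foldl mstep (Some ([], [])) w"

abbreviation mzero :: melem where "mzero \<equiv> None"
abbreviation mone :: melem where "mone \<equiv> Some ([], [])"

definition motzkin_shift :: "nat \<Rightarrow> nat \<Rightarrow> (int \<Rightarrow> letter) set" where
  "motzkin_shift M N = {x. (\<forall>k. x k \<in> alphabet M N) \<and>
      (\<forall>i j. i \<le> j \<longrightarrow> red (map (\<lambda>t. x (i + int t)) [0..<nat (j - i) + 1]) \<noteq> mzero)}"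

definition blocks :: "nat \<Rightarrow> nat \<Rightarrow> nat \<Rightarrow> letter list set" where
  "blocks M N n = {w. \<exists>x \<in> motzkin_shift M N. \<exists>k. w = map (\<lambda>t. x (k + int t)) [0..<n]}"

definition motzkin_code_n :: "nat \<Rightarrow> nat \<Rightarrow> nat \<Rightarrow> letter list set" where
  "motzkin_code_n M N n = {w \<in> blocks M N n. \<exists>i v. 1 \<le> i \<and> i \<le> M \<and>
        w = Lam i # v @ [Rho i] \<and> red v = mone}"

definition motzkin_code :: "nat \<Rightarrow> nat \<Rightarrow> letter list set" where
  "motzkin_code M N = (\<Union>n\<in>{1..}. motzkin_code_n M N n)"

definition genfun :: "letter list set \<Rightarrow> real fps" where
  "genfun E = Abs_fps (\<lambda>n. real (card {u \<in> E. length u = n}))"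

end

theory Submission
  imports Defs
begin

unbundle fps_syntax

lemma foldl_None[simp]: "foldl mstep None u = None"
  by (induction u) auto

lemma red_append: "red (u @ v) = foldl mstep (red u) v"
  by (simp add: red_def)

lemma red_Cons: "red (a # u) = foldl mstep (mstep mone a) u"
  by (simp add: red_def)

lemma suffix_nonzero:
  "foldl mstep (Some (rs, T @ ls)) u \<noteq> None \<Longrightarrow> foldl mstep (Some (R, T)) u \<noteq> None"
proof (induction u arbitrary: rs R T ls)
  case Nil then show ?case by simp
next
  case (Cons a u)
  show ?case
  proof (cases a)
    case (Lam i) then show ?thesis using Cons.IH[of rs "i # T" ls] Cons.prems by simp
  next
    case (One k) then show ?thesis using Cons.IH[of rs T ls] Cons.prems by simp
  next
    case (Rho j)
    show ?thesis
    proof (cases T)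
      case Nil
      show ?thesis
      proof (cases ls)
        case Nil2: Nil
        then show ?thesis using Cons.IH[of "rs @ [j]" "[]" "[]" "R @ [j]"] Cons.prems Rho Nil by simp
      next
        case (Cons l ls')
        then show ?thesis using Cons.IH[of rs "[]" ls' "R @ [j]"] Cons.prems Rho Nil
          by (cases "l = j") auto
      qed
    next
      case (Cons t T')
      then show ?thesis using Cons.IH[of rs T' ls R] Cons.prems Rho
        by (cases "t = j") auto
    qed
  qed
qed

lemma infix_nonzero:
  assumes "red (p @ u @ s) \<noteq> None" shows "red u \<noteq> None"
proof -
  have "foldl mstep (red p) (u @ s) \<noteq> None" using assms by (simp add: red_def)
  then have a: "foldl mstep (red p) u \<noteq> None" by (metis foldl_None foldl_append)
  then obtain rs ls where "red p = Some (rs, ls)" by (cases "red p") auto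
  then show ?thesis using a suffix_nonzero[of rs "[]" ls u "[]"] by (simp add: red_def)
qed

lemma rs_mono:
  "foldl mstep (Some (rs, ls)) u = Some (rs', ls') \<Longrightarrow> length rs \<le> length rs'"
proof (induction u arbitrary: rs ls)
  case Nil then show ?case by simp
next
  case (Cons a u)
  show ?case
  proof (cases a)
    case (Lam i) then show ?thesis using Cons by simp
  next
    case (One k) then show ?thesis using Cons by simp
  next
    case (Rho j)
    show ?thesis
    proof (cases ls)
      case Nil then show ?thesis using Cons Rho by fastforce
    next
      case (Cons l ls') then show ?thesis using Cons.IH[of rs ls'] Cons.prems Rho
        by (cases "l = j") auto
    qed
  qed
qed

lemma balanced_shift:
  "foldl mstep (Some (rsz, Tz)) v = Some (rsz, T) \<Longrightarrow>
   foldl mstep (Some (rs, Tz @ ls)) v = Some (rs, T @ ls)"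
proof (induction v arbitrary: Tz rsz rs)
  case Nil then show ?case by simp
next
  case (Cons a v)
  show ?case
  proof (cases a)
    case (Lam i) then show ?thesis using Cons.IH[where Tz="i # Tz" and rsz=rsz and rs=rs] Cons.prems by simp
  next
    case (One k) then show ?thesis using Cons by simp
  next
    case (Rho j)
    show ?thesis
    proof (cases Tz)
      case Nil
      then have "foldl mstep (Some (rsz @ [j], [])) v = Some (rsz, T)" using Cons.prems Rho by simp
      from rs_mono[OF this] show ?thesis by simp
    next
      case (Cons t T')
      then show ?thesis using Cons.IH[where Tz=T' and rsz=rsz and rs=rs] Cons.prems Rho
        by (cases "t = j") auto
    qed
  qed
qed

lemma balanced_any:
  "red v = mone \<Longrightarrow> foldl mstep (Some (rs, ls)) v = Some (rs, ls)"
  using balanced_shift[of "[]" "[]" v "[]" rs ls] by (simp add: red_def)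

lemma first_return:
  "foldl mstep (Some ([], T @ [i])) u = mone \<Longrightarrow>
   \<exists>v u'. u = v @ Rho i # u' \<and> foldl mstep (Some ([], T)) v = mone \<and> red u' = mone"
proof (induction u arbitrary: T)
  case Nil then show ?case by simp
next
  case (Cons a u)
  show ?case
  proof (cases a)
    case (Lam j)
    then obtain v u' where "u = v @ Rho i # u'" "foldl mstep (Some ([], j # T)) v = mone" "red u' = mone"
      using Cons.IH[of "j # T"] Cons.prems by auto
    then show ?thesis using Lam by (intro exI[of _ "Lam j # v"] exI[of _ u']) auto
  next
    case (One k)
    then obtain v u' where "u = v @ Rho i # u'" "foldl mstep (Some ([], T)) v = mone" "red u' = mone"
      using Cons.IH[of T] Cons.prems by auto
    then show ?thesis using One by (intro exI[of _ "One k # v"] exI[of _ u']) auto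
  next
    case (Rho j)
    show ?thesis
    proof (cases T)
      case Nil
      then have ji: "j = i" using Cons.prems Rho by (cases "i = j") auto
      then have "red u = mone" using Cons.prems Rho Nil by (simp add: red_def)
      then show ?thesis using Rho Nil ji by (intro exI[of _ "[]"] exI[of _ u]) auto
    next
      case (Cons t T')
      then have tj: "t = j" using Cons.prems Rho by (cases "t = j") auto
      then obtain v u' where "u = v @ Rho i # u'" "foldl mstep (Some ([], T')) v = mone" "red u' = mone"
        using Cons.IH[of T'] Cons.prems Rho Cons by auto
      then show ?thesis using Rho Cons tj by (intro exI[of _ "Rho j # v"] exI[of _ u']) auto
    qed
  qed
qed


lemma alphabet_eq: "alphabet M N = Lam ` {1..M} \<union> Rho ` {1..M} \<union> One ` {1..N}"
  unfolding alphabet_def by auto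

lemma Lam_in_alphabet[simp]: "Lam i \<in> alphabet M N \<longleftrightarrow> 1 \<le> i \<and> i \<le> M"
  by (auto simp: alphabet_def)
lemma Rho_in_alphabet[simp]: "Rho i \<in> alphabet M N \<longleftrightarrow> 1 \<le> i \<and> i \<le> M"
  by (auto simp: alphabet_def)
lemma One_in_alphabet[simp]: "One i \<in> alphabet M N \<longleftrightarrow> 1 \<le> i \<and> i \<le> N"
  by (auto simp: alphabet_def)

lemma finite_alphabet: "finite (alphabet M N)"
  unfolding alphabet_eq by auto

definition Dset :: "nat \<Rightarrow> nat \<Rightarrow> nat \<Rightarrow> letter list set" where
  "Dset M N n = {v. set v \<subseteq> alphabet M N \<and> length v = n \<and> red v = mone}"

lemma finite_Dset: "finite (Dset M N n)"
proof -
  have "Dset M N n \<subseteq> {xs. set xs \<subseteq> alphabet M N \<and> length xs = n}" unfolding Dset_def by auto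
  then show ?thesis using finite_lists_length_eq[OF finite_alphabet] finite_subset by blast
qed

lemma Dset_0: "Dset M N 0 = {[]}"
  unfolding Dset_def by (auto simp: red_def)

lemma red_not_mone_Rho: "red (Rho j # u) \<noteq> mone"
proof
  assume "red (Rho j # u) = mone"
  then have "foldl mstep (Some ([j], [])) u = Some ([], [])" by (simp add: red_def)
  from rs_mono[OF this] show False by simp
qed

lemma Dset_Suc: "Dset M N (Suc n) =
   (\<lambda>(k,v). One k # v) ` ({1..N} \<times> Dset M N n) \<union>
   (\<Union>m\<in>{..<n}. (\<lambda>(i,v,v'). Lam i # v @ Rho i # v') ` ({1..M} \<times> Dset M N m \<times> Dset M N (n - 1 - m)))"
  (is "?L = ?A \<union> ?B")
proof
  show "?L \<subseteq> ?A \<union> ?B"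
  proof
    fix w assume w: "w \<in> ?L"
    then obtain a u where wu: "w = a # u" by (cases w) (auto simp: Dset_def)
    show "w \<in> ?A \<union> ?B"
    proof (cases a)
      case (One k)
      then have "k \<in> {1..N}" "u \<in> Dset M N n" using w wu by (auto simp: Dset_def red_def)
      then show ?thesis using wu One by (intro UnI1 image_eqI[where x="(k,u)"]) auto
    next
      case (Rho j)
      then show ?thesis using w wu red_not_mone_Rho by (auto simp: Dset_def)
    next
      case (Lam i)
      then have "foldl mstep (Some ([], [] @ [i])) u = mone" using w wu by (simp add: Dset_def red_def)
      from first_return[OF this] obtain v u' where vu: "u = v @ Rho i # u'" "red v = mone" "red u' = mone"
        by (auto simp: red_def)
      have i: "i \<in> {1..M}" using w wu Lam by (auto simp: Dset_def)
      have len: "length v < n" "length u' = n - 1 - length v" using w wu vu by (auto simp: Dset_def)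
      have "v \<in> Dset M N (length v)" "u' \<in> Dset M N (n - 1 - length v)"
        using w wu vu len by (auto simp: Dset_def)
      then have "w \<in> (\<lambda>(i,v,v'). Lam i # v @ Rho i # v') ` ({1..M} \<times> Dset M N (length v) \<times> Dset M N (n - 1 - length v))"
        using i by (intro image_eqI[where x="(i, v, u')"]) (simp_all add: wu vu Lam)
      then show ?thesis using len by (intro UnI2 UN_I[where a="length v"]) auto
    qed
  qed
next
  show "?A \<union> ?B \<subseteq> ?L"
  proof
    fix w assume "w \<in> ?A \<union> ?B"
    then show "w \<in> ?L"
    proof
      assume "w \<in> ?A"
      then show ?thesis by (auto simp: Dset_def red_def)
    next
      assume "w \<in> ?B"
      then obtain m where m0: "m \<in> {..<n}" and
        "w \<in> (\<lambda>(i,v,v'). Lam i # v @ Rho i # v') ` ({1..M} \<times> Dset M N m \<times> Dset M N (n - 1 - m))"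
        by (rule UN_E)
      then obtain i v v' where m: "m < n" "i \<in> {1..M}" "v \<in> Dset M N m" "v' \<in> Dset M N (n - 1 - m)"
        and w: "w = Lam i # v @ Rho i # v'" using m0 by auto
      have "red w = foldl mstep (foldl mstep (Some ([], [i])) v) (Rho i # v')"
        using w by (simp add: red_def)
      also have "\<dots> = mone" using m balanced_any[of v "[]" "[i]"] by (simp add: Dset_def red_def)
      finally show ?thesis using m w by (auto simp: Dset_def)
    qed
  qed
qed

lemma red_Rho_suffix: "red w = mone \<Longrightarrow> red (w @ Rho i # u) \<noteq> mone"
proof
  assume "red w = mone" "red (w @ Rho i # u) = mone"
  then have "foldl mstep (Some ([i], [])) u = Some ([], [])" by (simp add: red_def)
  from rs_mono[OF this] show False by simp
qed

lemma split_unique: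
  assumes "Lam i # v @ Rho i # v' = Lam j # w @ Rho j # w'" "red v = mone" "red w = mone"
  shows "length v = length w"
proof -
  have e: "v @ Rho i # v' = w @ Rho i # w'" and "i = j" using assms by auto
  from e obtain us where "(v = w @ us \<and> us @ Rho i # v' = Rho i # w') \<or> (v @ us = w \<and> Rho i # v' = us @ Rho i # w')"
    using append_eq_append_conv2[of v "Rho i # v'" w "Rho i # w'"] by blast
  then show ?thesis
  proof
    assume a: "v = w @ us \<and> us @ Rho i # v' = Rho i # w'"
    show ?thesis
    proof (cases us)
      case Nil then show ?thesis using a by simp
    next
      case (Cons b us') then show ?thesis using a assms red_Rho_suffix[of w i us'] by auto
    qed
  next
    assume a: "v @ us = w \<and> Rho i # v' = us @ Rho i # w'"
    show ?thesis
    proof (cases us)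
      case Nil then show ?thesis using a by simp
    next
      case (Cons b us') then show ?thesis using a assms red_Rho_suffix[of v i us'] by auto
    qed
  qed
qed

lemma card_Dset_Suc: "card (Dset M N (Suc n)) =
   N * card (Dset M N n) + (\<Sum>m<n. M * card (Dset M N m) * card (Dset M N (n - 1 - m)))"
proof -
  let ?A = "(\<lambda>(k,v). One k # v) ` ({1..N} \<times> Dset M N n)"
  let ?f = "\<lambda>m. (\<lambda>(i,v,v'). Lam i # v @ Rho i # v') ` ({1..M} \<times> Dset M N m \<times> Dset M N (n - 1 - m))"
  have fin: "finite (?f m)" for m using finite_Dset by auto
  have cA: "card ?A = N * card (Dset M N n)"
    by (subst card_image) (auto simp: inj_on_def card_cartesian_product)
  have cf: "card (?f m) = M * card (Dset M N m) * card (Dset M N (n - 1 - m))" for m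
  proof -
    have "inj_on (\<lambda>(i,v,v'). Lam i # v @ Rho i # v') ({1..M} \<times> Dset M N m \<times> Dset M N (n - 1 - m))"
      by (auto simp: inj_on_def Dset_def)
    then show ?thesis by (simp add: card_image card_cartesian_product)
  qed
  have disj: "\<forall>m\<in>{..<n}. \<forall>m'\<in>{..<n}. m \<noteq> m' \<longrightarrow> ?f m \<inter> ?f m' = {}"
  proof (intro ballI impI)
    fix m m' :: nat assume "m \<noteq> m'"
    show "?f m \<inter> ?f m' = {}"
    proof (rule ccontr)
      assume "?f m \<inter> ?f m' \<noteq> {}"
      then obtain x where "x \<in> ?f m \<inter> ?f m'" by (meson ex_in_conv)
      then have x1: "x \<in> ?f m" and x2: "x \<in> ?f m'" by (rule IntD1, rule IntD2)
      from x1 obtain i v v' where v: "v \<in> Dset M N m" "x = Lam i # v @ Rho i # v'" by auto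
      from x2 obtain j w w' where w: "w \<in> Dset M N m'" "x = Lam j # w @ Rho j # w'" by auto
      have "v \<in> Dset M N m" "w \<in> Dset M N m'"
        "Lam i # v @ Rho i # v' = Lam j # w @ Rho j # w'" using v w by auto
      with split_unique[OF this(3)] \<open>m \<noteq> m'\<close> show False by (auto simp: Dset_def)
    qed
  qed
  have cB: "card (\<Union>m\<in>{..<n}. ?f m) = (\<Sum>m<n. M * card (Dset M N m) * card (Dset M N (n - 1 - m)))"
    by (subst card_UN_disjoint) (use fin disj cf in auto)
  have dAB: "?A \<inter> (\<Union>m\<in>{..<n}. ?f m) = {}" by auto
  show ?thesis unfolding Dset_Suc
    by (subst card_Un_disjoint) (use fin finite_Dset dAB cA cB in auto)
qed


definition pat :: "int \<Rightarrow> letter" where "pat k = (if even k then Lam 1 else Rho 1)"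

definition ext :: "letter list \<Rightarrow> int \<Rightarrow> letter" where
  "ext w k = (if k < 0 then pat k else if k < int (length w) then w ! nat k else pat (k - int (length w)))"

definition PP :: "nat \<Rightarrow> letter list" where "PP a = map (\<lambda>t. pat (int t)) [0..<2*a]"

lemma length_PP[simp]: "length (PP a) = 2 * a" by (simp add: PP_def)

lemma PP_fold: "foldl mstep (Some st) (PP a) = Some st"
proof (induction a)
  case 0 then show ?case by (simp add: PP_def)
next
  case (Suc a)
  have "[0..<2*Suc a] = [0..<2*a] @ [2*a, Suc (2*a)]" by simp
  then have "PP (Suc a) = PP a @ [Lam 1, Rho 1]" by (simp add: PP_def pat_def)
  then show ?case using Suc by (cases st) simp
qed

lemma ext_alphabet:
  assumes "set w \<subseteq> alphabet M N" "1 \<le> M" shows "ext w k \<in> alphabet M N"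
proof -
  have "pat k' \<in> alphabet M N" for k' using assms by (simp add: pat_def)
  moreover have "w ! nat k \<in> alphabet M N" if "0 \<le> k" "k < int (length w)"
    using assms that by (metis nat_less_iff nth_mem subsetD)
  ultimately show ?thesis unfolding ext_def by auto
qed

lemma window_eq:
  "map (\<lambda>t. ext w (- 2 * int a + int t)) [0..<2*a + length w + 2*b] = PP a @ w @ PP b"
proof (rule nth_equalityI)
  show "length (map (\<lambda>t. ext w (- 2 * int a + int t)) [0..<2*a + length w + 2*b]) = length (PP a @ w @ PP b)"
    by (simp add: PP_def)
next
  fix t assume "t < length (map (\<lambda>t. ext w (- 2 * int a + int t)) [0..<2*a + length w + 2*b])"
  then have t: "t < 2*a + length w + 2*b" by simp
  have lhs: "map (\<lambda>t. ext w (- 2 * int a + int t)) [0..<2*a + length w + 2*b] ! t = ext w (- 2 * int a + int t)"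
    using t by simp
  show "map (\<lambda>t. ext w (- 2 * int a + int t)) [0..<2*a + length w + 2*b] ! t = (PP a @ w @ PP b) ! t"
  proof (cases "t < 2*a")
    case True
    have "even (- 2 * int a + int t) = even t" by simp
    then show ?thesis using True lhs by (simp add: ext_def nth_append PP_def pat_def)
  next
    case False
    show ?thesis
    proof (cases "t < 2*a + length w")
      case True
      then have "nat (- 2 * int a + int t) = t - 2*a" using False by simp
      moreover have "t - 2*a < length w" using True False by simp
      ultimately show ?thesis using True False lhs by (simp add: ext_def nth_append PP_def)
    next
      case False2: False
      have "- 2 * int a + int t - int (length w) = int (t - 2*a - length w)" using False False2 by simp
      moreover have "\<not> t - 2*a < length w" using False2 by simp
      moreover have "PP b ! (t - 2*a - length w) = pat (int (t - 2*a - length w))"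
      proof -
        have k: "t - 2*a - length w < 2*b" using t False2 by simp
        then show ?thesis by (simp add: PP_def del: upt_Suc)
      qed
      moreover have "int t - 2 * int a - int (length w) = int t - (2 * int a + int (length w))" by simp
      ultimately show ?thesis using False False2 lhs t by (simp add: ext_def nth_append diff_diff_eq)
    qed
  qed
qed

lemma in_blocks:
  assumes "red w = mone" "set w \<subseteq> alphabet M N" "1 \<le> M"
  shows "w \<in> blocks M N (length w)"
proof -
  let ?x = "ext w"
  have "?x \<in> motzkin_shift M N"
    unfolding motzkin_shift_def
  proof (intro CollectI conjI allI impI)
    fix k show "?x k \<in> alphabet M N" using ext_alphabet assms by blast
  next
    fix i j :: int assume ij: "i \<le> j"
    define m where "m = nat (j - i) + 1"
    define a where "a = nat (- i)"
    define b where "b = nat j + 1"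
    define d where "d = nat (i + 2 * int a)"
    define L where "L = map (\<lambda>t. ext w (- 2 * int a + int t)) [0..<2*a + length w + 2*b]"
    have redL: "red L = mone" unfolding L_def window_eq
      using assms(1) by (simp add: red_append PP_fold[unfolded red_def] red_def)
    have dm: "d + m \<le> 2*a + length w + 2*b" unfolding d_def m_def a_def b_def using ij by auto
    have fac: "map (\<lambda>t. ?x (i + int t)) [0..<nat (j - i) + 1] = take m (drop d L)"
    proof (rule nth_equalityI)
      show "length (map (\<lambda>t. ?x (i + int t)) [0..<nat (j - i) + 1]) = length (take m (drop d L))"
        using dm by (simp add: L_def m_def)
    next
      fix t assume "t < length (map (\<lambda>t. ?x (i + int t)) [0..<nat (j - i) + 1])"
      then have t: "t < m" by (simp add: m_def)
      have e: "- 2 * int a + int (d + t) = i + int t" unfolding d_def a_def by auto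
      have 1: "map (\<lambda>t. ?x (i + int t)) [0..<nat (j - i) + 1] ! t = ?x (i + int t)"
        using t unfolding m_def by (simp del: upt_Suc)
      have 2: "take m (drop d L) ! t = L ! (d + t)" using t dm by (simp add: L_def)
      have 3: "L ! (d + t) = ext w (- 2 * int a + int (d + t))" using t dm unfolding L_def
        by (simp del: upt_Suc)
      show "map (\<lambda>t. ?x (i + int t)) [0..<nat (j - i) + 1] ! t = take m (drop d L) ! t"
        by (simp only: 1 2 3 e)
    qed
    have "L = take d L @ take m (drop d L) @ drop m (drop d L)" by (metis append_take_drop_id)
    then have "red (take d L @ take m (drop d L) @ drop m (drop d L)) \<noteq> None" using redL by simp
    from infix_nonzero[OF this] show "red (map (\<lambda>t. ?x (i + int t)) [0..<nat (j - i) + 1]) \<noteq> mzero"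
      using fac by simp
  qed
  moreover have "w = map (\<lambda>t. ?x (0 + int t)) [0..<length w]"
    by (rule nth_equalityI) (auto simp: ext_def)
  ultimately show ?thesis unfolding blocks_def by blast
qed

lemma blocks_props: "w \<in> blocks M N n \<Longrightarrow> length w = n \<and> set w \<subseteq> alphabet M N"
  unfolding blocks_def motzkin_shift_def by auto


lemma code_len: "{u \<in> motzkin_code M N. length u = n} = motzkin_code_n M N n"
proof
  show "{u \<in> motzkin_code M N. length u = n} \<subseteq> motzkin_code_n M N n"
  proof
    fix u assume "u \<in> {u \<in> motzkin_code M N. length u = n}"
    then obtain k where "u \<in> motzkin_code_n M N k" "length u = n" unfolding motzkin_code_def by blast
    moreover then have "length u = k" unfolding motzkin_code_n_def using blocks_props by blast
    ultimately show "u \<in> motzkin_code_n M N n" by simp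
  qed
next
  show "motzkin_code_n M N n \<subseteq> {u \<in> motzkin_code M N. length u = n}"
  proof
    fix u assume u: "u \<in> motzkin_code_n M N n"
    then have l: "length u = n" unfolding motzkin_code_n_def using blocks_props by blast
    moreover have "1 \<le> n" using u unfolding motzkin_code_n_def using l by auto
    ultimately show "u \<in> {u \<in> motzkin_code M N. length u = n}"
      using u unfolding motzkin_code_def by auto
  qed
qed

lemma code_n_small: "n < 2 \<Longrightarrow> motzkin_code_n M N n = {}"
  unfolding motzkin_code_n_def using blocks_props by fastforce

lemma code_n_Suc2: "motzkin_code_n M N (Suc (Suc n)) =
   (\<lambda>(i,v). Lam i # v @ [Rho i]) ` ({1..M} \<times> Dset M N n)"
proof
  show "motzkin_code_n M N (Suc (Suc n)) \<subseteq> (\<lambda>(i,v). Lam i # v @ [Rho i]) ` ({1..M} \<times> Dset M N n)"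
  proof
    fix w assume "w \<in> motzkin_code_n M N (Suc (Suc n))"
    then obtain i v where w: "w \<in> blocks M N (Suc (Suc n))" "1 \<le> i" "i \<le> M"
      "w = Lam i # v @ [Rho i]" "red v = mone" unfolding motzkin_code_n_def by blast
    then have "v \<in> Dset M N n" using blocks_props[OF w(1)] by (auto simp: Dset_def)
    then show "w \<in> (\<lambda>(i,v). Lam i # v @ [Rho i]) ` ({1..M} \<times> Dset M N n)"
      using w by (intro image_eqI[where x="(i,v)"]) auto
  qed
next
  show "(\<lambda>(i,v). Lam i # v @ [Rho i]) ` ({1..M} \<times> Dset M N n) \<subseteq> motzkin_code_n M N (Suc (Suc n))"
  proof
    fix w assume "w \<in> (\<lambda>(i,v). Lam i # v @ [Rho i]) ` ({1..M} \<times> Dset M N n)"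
    then obtain i v where iv: "i \<in> {1..M}" "v \<in> Dset M N n" "w = Lam i # v @ [Rho i]" by auto
    have "red w = foldl mstep (foldl mstep (Some ([], [i])) v) [Rho i]"
      using iv by (simp add: red_def)
    also have "\<dots> = mone" using iv balanced_any[of v "[]" "[i]"] by (simp add: Dset_def red_def)
    finally have "w \<in> blocks M N (length w)" using iv by (intro in_blocks) (auto simp: Dset_def)
    then have "w \<in> blocks M N (Suc (Suc n))" using iv by (simp add: Dset_def)
    then show "w \<in> motzkin_code_n M N (Suc (Suc n))" unfolding motzkin_code_n_def using iv
      by (auto simp: Dset_def)
  qed
qed

lemma card_code_Suc2: "card (motzkin_code_n M N (Suc (Suc n))) = M * card (Dset M N n)"
proof -
  have "inj_on (\<lambda>(i,v). Lam i # v @ [Rho i]) ({1..M} \<times> Dset M N n)"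
    by (auto simp: inj_on_def)
  then show ?thesis unfolding code_n_Suc2 by (simp add: card_image card_cartesian_product)
qed

theorem theorem2p1:
  fixes M N :: nat
  defines "f \<equiv> genfun (motzkin_code M N)"
  shows "f ^ 2 + (of_nat N * fps_X - 1) * f + of_nat M * fps_X ^ 2 = 0
     \<and> f = fps_const (1/2) * (1 - of_nat N * fps_X
            - fps_radical (\<lambda>k x. root k x) 2 ((1 - of_nat N * fps_X) ^ 2 - 4 * of_nat M * fps_X ^ 2))"
proof -
  define g :: "real fps" where "g = Abs_fps (\<lambda>n. real (card (Dset M N n)))"
  define c :: "real fps" where "c = of_nat M"
  define e :: "real fps" where "e = of_nat N"
  have c: "c = fps_const (real M)" unfolding c_def by (simp add: fps_of_nat)
  have e: "e = fps_const (real N)" unfolding e_def by (simp add: fps_of_nat)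
  have f1: "f = c * (fps_X ^ 2 * g)"
  proof (rule fps_ext)
    fix n
    show "f $ n = (c * (fps_X ^ 2 * g)) $ n"
    proof (cases "n < 2")
      case True
      then show ?thesis unfolding f_def genfun_def c
        by (simp add: code_len code_n_small fps_X_power_mult_nth)
    next
      case False
      then obtain k where "n = Suc (Suc k)" by (metis add_2_eq_Suc le_Suc_ex not_less)
      then show ?thesis unfolding f_def genfun_def c g_def
        by (simp add: code_len card_code_Suc2 fps_X_power_mult_nth)
    qed
  qed
  have g1: "g = 1 + e * (fps_X * g) + c * (fps_X ^ 2 * g ^ 2)"
  proof (rule fps_ext)
    fix n
    show "g $ n = (1 + e * (fps_X * g) + c * (fps_X ^ 2 * g ^ 2)) $ n"
    proof (cases n)
      case 0
      then show ?thesis unfolding g_def c e by (simp add: Dset_0 fps_X_power_mult_nth)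
    next
      case (Suc k)
      have "(\<Sum>m<k. M * card (Dset M N m) * card (Dset M N (k - 1 - m))) =
            (if k < 1 then 0 else M * (\<Sum>m=0..k-1. card (Dset M N m) * card (Dset M N (k - 1 - m))))"
      proof (cases k)
        case 0 then show ?thesis by simp
      next
        case (Suc k') then show ?thesis
          by (simp add: sum_distrib_left mult.assoc atLeast0AtMost lessThan_Suc_atMost)
      qed
      then have "real (card (Dset M N (Suc k))) = real N * real (card (Dset M N k)) +
         real M * (if k < 1 then 0 else (\<Sum>m=0..k-1. real (card (Dset M N m)) * real (card (Dset M N (k - 1 - m)))))"
        unfolding card_Dset_Suc by (simp split: if_splits)
      moreover have "(e * (fps_X * g)) $ Suc k = real N * real (card (Dset M N k))"
        unfolding e g_def by simp
      moreover have "(c * (fps_X ^ 2 * g ^ 2)) $ Suc k = real M * (if Suc k < 2 then 0 else (g ^ 2) $ (k - 1))"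
        unfolding c by (simp add: fps_X_power_mult_nth)
      moreover have "(g ^ 2) $ j = (\<Sum>m=0..j. real (card (Dset M N m)) * real (card (Dset M N (j - m))))" for j
        unfolding g_def by (simp add: power2_eq_square fps_mult_nth)
      moreover have "g $ Suc k = real (card (Dset M N (Suc k)))" unfolding g_def by simp
      ultimately show ?thesis unfolding Suc by (simp add: diff_diff_eq)
    qed
  qed
  have eq1: "f ^ 2 + (of_nat N * fps_X - 1) * f + of_nat M * fps_X ^ 2 = 0"
  proof -
    have "f ^ 2 + (e * fps_X - 1) * f + c * fps_X ^ 2 =
          c * fps_X ^ 2 * (1 + e * (fps_X * g) + c * (fps_X ^ 2 * g ^ 2) - g)"
      unfolding f1 by (simp add: algebra_simps power2_eq_square)
    also have "\<dots> = 0" using g1 by simp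
    finally show ?thesis unfolding c_def e_def .
  qed
  define h where "h = 1 - of_nat N * fps_X - 2 * f"
  define A :: "real fps" where "A = (1 - of_nat N * fps_X) ^ 2 - 4 * of_nat M * fps_X ^ 2"
  have hA: "h ^ 2 = A"
  proof -
    have "h ^ 2 = A + 4 * (f ^ 2 + (of_nat N * fps_X - 1) * f + of_nat M * fps_X ^ 2)"
      unfolding h_def A_def by (simp add: algebra_simps power2_eq_square)
    then show ?thesis using eq1 by simp
  qed
  have f0: "f $ 0 = 0" unfolding f1 by (simp add: fps_X_power_mult_nth c)
  have h0: "h $ 0 = 1" unfolding h_def using f0 by simp
  have A0: "A $ 0 = 1"
  proof -
    have "A $ 0 = (h * h) $ 0" using hA by (simp add: power2_eq_square)
    then show ?thesis using h0 by simp
  qed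
  have "h ^ Suc 1 = A \<longleftrightarrow> h = fps_radical (\<lambda>k x. root k x) (Suc 1) A"
    by (rule radical_unique) (simp_all add: A0 h0)
  then have hr: "h = fps_radical (\<lambda>k x. root k x) 2 A" using hA by (simp add: numeral_2_eq_2)
  have "fps_const (1/2) * (1 - of_nat N * fps_X - h) = fps_const (1/2) * (2 * f)"
    unfolding h_def by simp
  also have "\<dots> = (fps_const (1/2) * fps_const 2) * f"
    by (simp add: numeral_fps_const mult.assoc)
  also have "\<dots> = f" by simp
  finally have "f = fps_const (1/2) * (1 - of_nat N * fps_X - h)" by simp
  then show ?thesis using eq1 hr unfolding A_def by simp
qed

end
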